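(* There exist $N_0\in\mathbb{N}$ and $C>0$ such that \[\frac{R^2}{w(B(x,R))}\pi(B(x,R))\le C\Big(\frac{R}{\rho_w(x,\mu)}\Big)^{N_0}\] for all $x\in\mathbb{R}^d$ and all $R\ge\rho_w(x,\mu)$.
   Context: Setting: $d\ge3$; $w\in A_2$ is a weight on $\mathbb{R}^d$, $w(E)=\int_Ew\,dx$, and there exist $\beta>2$, $C>0$ with $w(B(x,tr))\ge Ct^\beta w(B(x,r))$ for all $x$, $r>0$, $t>1$. $\mu$ is a positive Radon measure, $d\pi=w\,d\mu$, with constants $C_0,\delta,C_1>0$ such that (M1) $\frac{r^2}{w(B(x,r))}\pi(B(x,r))\le C_0 (r/R)^\delta \frac{R^2}{w(B(x,R))}\pi(B(x,R))$ for all $x$, $0<r<R$; (M2) $\pi(B(x,2r))\le C_1(\pi(B(x,r))+w(B(x,r))/r^2)$ for all $x$, $r>0$. The critical function is $\rho_w(x,\mu)=\sup\{r>0:\frac{r^2}{w(B(x,r))}\pi(B(x,r))\le C_1\}$. *)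

theory Defs
  imports "HOL-Analysis.Analysis"
begin

definition wmeas :: "('a::euclidean_space \<Rightarrow> real) \<Rightarrow> 'a set \<Rightarrow> real" where
  "wmeas w E = (LINT y:E|lborel. w y)"

definition A2_weight :: "('a::euclidean_space \<Rightarrow> real) \<Rightarrow> bool" where
  "A2_weight w \<longleftrightarrow>
     w \<in> borel_measurable borel \<and> (\<forall>x. 0 \<le> w x) \<and> (AE x in lborel. 0 < w x) \<and>
     (\<forall>x r. set_integrable lborel (ball x r) w \<and>
            set_integrable lborel (ball x r) (\<lambda>y. 1 / w y)) \<and>
     (\<exists>K. \<forall>x r. 0 < r \<longrightarrow>
        (1 / measure lborel (ball x r) * (LINT y:ball x r|lborel. w y)) *
        (1 / measure lborel (ball x r) * (LINT y:ball x r|lborel. 1 / w y)) \<le> K)"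

definition radon_measure :: "'a::euclidean_space measure \<Rightarrow> bool" where
  "radon_measure \<mu> \<longleftrightarrow> sets \<mu> = sets borel \<and> (\<forall>K. compact K \<longrightarrow> emeasure \<mu> K < \<infinity>)"

definition pimeas :: "('a::euclidean_space \<Rightarrow> real) \<Rightarrow> 'a measure \<Rightarrow> 'a set \<Rightarrow> ennreal" where
  "pimeas w \<mu> E = (\<integral>\<^sup>+ y\<in>E. ennreal (w y) \<partial>\<mu>)"

definition Qfun :: "('a::euclidean_space \<Rightarrow> real) \<Rightarrow> 'a measure \<Rightarrow> 'a \<Rightarrow> real \<Rightarrow> ennreal" where
  "Qfun w \<mu> x r = ennreal (r^2 / wmeas w (ball x r)) * pimeas w \<mu> (ball x r)"

definition rho_w :: "real \<Rightarrow> ('a::euclidean_space \<Rightarrow> real) \<Rightarrow> 'a measure \<Rightarrow> 'a \<Rightarrow> ereal" where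
  "rho_w C1 w \<mu> x = Sup {ereal r | r. 0 < r \<and> Qfun w \<mu> x r \<le> ennreal C1}"

end

theory Submission
  imports Defs
begin

lemma wmeas_pos:
  fixes w :: "'a::euclidean_space \<Rightarrow> real"
  assumes A2: "A2_weight w" and r: "0 < r"
  shows "0 < wmeas w (ball x r)"
proof -
  have wm: "w \<in> borel_measurable borel" and nn: "\<And>x. 0 \<le> w x" and ae: "AE x in lborel. 0 < w x"
    and int: "set_integrable lborel (ball x r) w"
    using A2 unfolding A2_weight_def by auto
  have int': "integrable lborel (\<lambda>y. indicator (ball x r) y * w y)"
    using int unfolding set_integrable_def by simp
  have ge: "0 \<le> wmeas w (ball x r)"
    unfolding wmeas_def set_lebesgue_integral_def using nn by (auto intro!: integral_nonneg_AE)
  show ?thesis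
  proof (rule ccontr)
    assume "\<not> ?thesis"
    then have "wmeas w (ball x r) = 0" using ge by simp
    then have "integral\<^sup>L lborel (\<lambda>y. indicator (ball x r) y * w y) = 0"
      unfolding wmeas_def set_lebesgue_integral_def by simp
    then have "AE y in lborel. indicator (ball x r) y * w y = 0"
      using integral_nonneg_eq_0_iff_AE[OF int'] nn by simp
    with ae have "AE y in lborel. y \<notin> ball x r"
      by eventually_elim (auto simp: indicator_def)
    then have "emeasure lborel (ball x r) = 0"
      by (subst (asm) AE_iff_measurable[of "ball x r"]) auto
    moreover have "measure lborel (ball x r) > 0" using content_ball_pos r by blast
    ultimately show False by (simp add: measure_def)
  qed
qed

lemma wmeas_mono:
  fixes w :: "'a::euclidean_space \<Rightarrow> real"
  assumes A2: "A2_weight w" and r: "r \<le> R"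
  shows "wmeas w (ball x r) \<le> wmeas w (ball x R)"
proof -
  have nn: "\<And>x. 0 \<le> w x"
    and int: "set_integrable lborel (ball x r) w" "set_integrable lborel (ball x R) w"
    using A2 unfolding A2_weight_def by auto
  show ?thesis unfolding wmeas_def set_lebesgue_integral_def
    apply (rule integral_mono)
    using int nn r unfolding set_integrable_def by (auto simp: indicator_def)
qed

lemma step:
  fixes w :: "'a::euclidean_space \<Rightarrow> real" and \<mu> :: "'a measure"
  assumes A2: "A2_weight w" and C1: "C1 > 0"
    and M2: "\<And>x r. r > 0 \<Longrightarrow>
        pimeas w \<mu> (ball x (2 * r)) \<le>
          ennreal C1 * (pimeas w \<mu> (ball x r) + ennreal (wmeas w (ball x r) / r^2))"
    and s: "0 < s" "s \<le> R" "R \<le> 2 * s"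
  shows "Qfun w \<mu> x R \<le> ennreal (4 * C1) * (Qfun w \<mu> x s + 1)"
proof -
  define ws where "ws = wmeas w (ball x s)"
  define wR where "wR = wmeas w (ball x R)"
  have ws: "0 < ws" unfolding ws_def using wmeas_pos[OF A2 s(1)] .
  have wsR: "ws \<le> wR" unfolding ws_def wR_def using wmeas_mono[OF A2 s(2)] .
  define a where "a = s^2 / ws"
  have a: "0 < a" unfolding a_def using ws s by simp
  have "R^2 \<le> (2 * s)^2" using s by (intro power_mono) auto
  then have "R^2 / wR \<le> 4 * s^2 / ws"
    using ws wsR by (intro frac_le) (auto simp: power_mult_distrib)
  then have e1: "ennreal (R^2 / wR) \<le> ennreal (4 * a)" unfolding a_def by (intro ennreal_leI) simp
  have p1: "pimeas w \<mu> (ball x R) \<le> pimeas w \<mu> (ball x (2 * s))"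
    unfolding pimeas_def using s by (intro nn_set_integral_set_mono) auto
  have "Qfun w \<mu> x R = ennreal (R^2 / wR) * pimeas w \<mu> (ball x R)"
    unfolding Qfun_def wR_def ..
  also have "\<dots> \<le> ennreal (4 * a) * pimeas w \<mu> (ball x (2 * s))"
    using e1 p1 by (intro mult_mono) auto
  also have "\<dots> \<le> ennreal (4 * a) * (ennreal C1 * (pimeas w \<mu> (ball x s) + ennreal (ws / s^2)))"
    using M2[OF s(1), of x] unfolding ws_def by (intro mult_left_mono) auto
  also have "ws / s^2 = 1 / a" unfolding a_def by simp
  also have "ennreal (4 * a) * (ennreal C1 * (pimeas w \<mu> (ball x s) + ennreal (1 / a)))
      = ennreal (4 * C1) * (ennreal a * pimeas w \<mu> (ball x s) + ennreal a * ennreal (1 / a))"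
    using a C1 by (simp add: ennreal_mult distrib_left mult_ac)
  also have "ennreal a * ennreal (1 / a) = 1"
    using a by (simp add: ennreal_mult[symmetric])
  also have "ennreal a * pimeas w \<mu> (ball x s) = Qfun w \<mu> x s"
    unfolding Qfun_def a_def ws_def ..
  finally show ?thesis .
qed

theorem lemma2p2:
  fixes w :: "'a::euclidean_space \<Rightarrow> real" and \<mu> :: "'a measure"
    and \<beta> Cw C0 \<delta> C1 :: real
  assumes dim: "DIM('a) \<ge> 3"
    and A2: "A2_weight w"
    and beta: "\<beta> > 2" and Cw: "Cw > 0"
    and revdbl: "\<And>x r t. r > 0 \<Longrightarrow> t > 1 \<Longrightarrow>
        wmeas w (ball x (t * r)) \<ge> Cw * t powr \<beta> * wmeas w (ball x r)"
    and radon: "radon_measure \<mu>"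
    and cpos: "C0 > 0" "\<delta> > 0" "C1 > 0"
    and M1: "\<And>x r R. 0 < r \<Longrightarrow> r < R \<Longrightarrow>
        Qfun w \<mu> x r \<le> ennreal (C0 * (r / R) powr \<delta>) * Qfun w \<mu> x R"
    and M2: "\<And>x r. r > 0 \<Longrightarrow>
        pimeas w \<mu> (ball x (2 * r)) \<le>
          ennreal C1 * (pimeas w \<mu> (ball x r) + ennreal (wmeas w (ball x r) / r^2))"
  shows "\<exists>N0::nat. \<exists>C>0. \<forall>x R. 0 < rho_w C1 w \<mu> x \<and> rho_w C1 w \<mu> x \<le> ereal R \<longrightarrow>
           Qfun w \<mu> x R \<le> ennreal (C * (R / real_of_ereal (rho_w C1 w \<mu> x)) ^ N0)"
proof -
  define A where "A = 4 * C1 + 1"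
  have A1: "1 < A" using cpos unfolding A_def by simp
  obtain N0 :: nat where N0: "A < 2 ^ N0" using real_arch_pow[of 2 A] by auto
  define C where "C = 4 * C1 * (C1 + 1) * 2 ^ N0"
  have Cpos: "C > 0" using cpos unfolding C_def by simp
  have iter: "Qfun w \<mu> x (2^n * r) + 1 \<le> ennreal (A^n * (C1 + 1))"
    if r: "0 < r" and Qr: "Qfun w \<mu> x r \<le> ennreal C1" for x r n
  proof (induction n)
    case 0
    have "Qfun w \<mu> x r + 1 \<le> ennreal C1 + ennreal 1" using Qr by (intro add_mono) auto
    also have "\<dots> = ennreal (C1 + 1)" using cpos by (simp add: ennreal_plus)
    finally show ?case by simp
  next
    case (Suc n)
    have "Qfun w \<mu> x (2^Suc n * r) \<le> ennreal (4 * C1) * (Qfun w \<mu> x (2^n * r) + 1)"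
      using step[OF A2 cpos(3) M2, of "2^n * r" "2^Suc n * r" x] r by simp
    also have "\<dots> \<le> ennreal (4 * C1) * ennreal (A^n * (C1 + 1))"
      using Suc by (intro mult_left_mono) auto
    also have "\<dots> = ennreal (4 * C1 * (A^n * (C1 + 1)))"
      using cpos A1 by (simp add: ennreal_mult)
    finally have "Qfun w \<mu> x (2^Suc n * r) + 1 \<le> ennreal (4 * C1 * (A^n * (C1 + 1))) + ennreal 1"
      by (intro add_mono) auto
    also have "\<dots> = ennreal (4 * C1 * (A^n * (C1 + 1)) + 1)"
    proof -
      have "0 \<le> 4 * C1 * (A^n * (C1 + 1))" using cpos A1 by simp
      then show ?thesis using ennreal_plus[of "4 * C1 * (A^n * (C1 + 1))" 1] by simp
    qed
    also have "\<dots> \<le> ennreal (A^Suc n * (C1 + 1))"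
    proof (intro ennreal_leI)
      have "1 \<le> A^n * (C1 + 1)" using A1 cpos
      proof -
        have "1 \<le> A^n" using A1 by (intro one_le_power) simp
        moreover have "1 \<le> C1 + 1" using cpos by simp
        ultimately show ?thesis using mult_mono[of 1 "A^n" 1 "C1 + 1"] by simp
      qed
      then show "4 * C1 * (A^n * (C1 + 1)) + 1 \<le> A^Suc n * (C1 + 1)"
        unfolding A_def by (simp add: algebra_simps)
    qed
    finally show ?case .
  qed
  show ?thesis
  proof (intro exI[of _ N0] exI[of _ C] conjI Cpos allI impI)
    fix x R assume h: "0 < rho_w C1 w \<mu> x \<and> rho_w C1 w \<mu> x \<le> ereal R"
    define S where "S = {ereal r | r. 0 < r \<and> Qfun w \<mu> x r \<le> ennreal C1}"
    have rho: "rho_w C1 w \<mu> x = Sup S" unfolding rho_w_def S_def ..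
    obtain p where p: "rho_w C1 w \<mu> x = ereal p"
      using h by (cases "rho_w C1 w \<mu> x") auto
    have p0: "0 < p" and pR: "p \<le> R" using h p by auto
    have "ereal (p/2) < Sup S" using p p0 rho by simp
    then obtain e where "e \<in> S" "ereal (p/2) < e" by (auto simp: less_Sup_iff)
    then obtain r where r: "0 < r" "Qfun w \<mu> x r \<le> ennreal C1" "p/2 < r" and rS: "ereal r \<in> S"
      unfolding S_def by auto
    have "ereal r \<le> Sup S" using rS by (rule Sup_upper)
    then have rp: "r \<le> p" using p rho by simp
    define k where "k = nat \<lfloor>R / r\<rfloor>"
    have Rr: "1 \<le> R / r" using r rp pR by simp
    have k1: "k \<ge> 1" unfolding k_def using Rr by linarith
    obtain n where n: "2^n \<le> k" "k < 2^(n+1)" using ex_power_ivl1[of 2 k] k1 by auto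
    have "(2::real)^n \<le> real k"
    proof -
      have "real (2^n) \<le> real k" using n(1) by (simp only: of_nat_le_iff)
      then show ?thesis by simp
    qed
    moreover have "real k \<le> R / r" unfolding k_def using Rr by linarith
    ultimately have n1: "2^n \<le> R / r" by (rule order_trans)
    have "R / r < real k + 1" unfolding k_def using Rr by linarith
    moreover have "real k + 1 \<le> 2^(n+1)"
    proof -
      have "k + 1 \<le> 2^(n+1)" using n(2) by simp
      then have "real (k + 1) \<le> real (2^(n+1))" by (simp only: of_nat_le_iff)
      then show ?thesis by simp
    qed
    ultimately have n2: "R / r < 2^(n+1)" by simp
    have s1: "2^n * r \<le> R" using n1 r by (simp add: field_simps)
    have s2: "R \<le> 2 * (2^n * r)" using n2 r by (simp add: field_simps)
    have "Qfun w \<mu> x R \<le> ennreal (4 * C1) * (Qfun w \<mu> x (2^n * r) + 1)"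
      using step[OF A2 cpos(3) M2, of "2^n * r" R x] r s1 s2 by simp
    also have "\<dots> \<le> ennreal (4 * C1) * ennreal (A^n * (C1 + 1))"
      using iter[OF r(1) r(2)] by (intro mult_left_mono) auto
    also have "\<dots> = ennreal (4 * C1 * (A^n * (C1 + 1)))"
      using cpos A1 by (simp add: ennreal_mult)
    also have "\<dots> \<le> ennreal (C * (R / real_of_ereal (rho_w C1 w \<mu> x)) ^ N0)"
    proof (intro ennreal_leI)
      have "A^n \<le> (2^N0)^n" using A1 N0 by (intro power_mono) auto
      also have "\<dots> = (2^n)^N0" by (simp add: power_mult[symmetric] mult.commute)
      also have "\<dots> \<le> (R / r)^N0" using n1 by (intro power_mono) auto
      also have "\<dots> \<le> (2 * (R / p))^N0"
      proof (intro power_mono)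
        show "R / r \<le> 2 * (R / p)" using r p0 pR by (simp add: field_simps)
        show "0 \<le> R / r" using Rr by simp
      qed
      also have "\<dots> = 2^N0 * (R/p)^N0" by (rule power_mult_distrib)
      finally have "A^n \<le> 2^N0 * (R/p)^N0" .
      then have "4 * C1 * (C1 + 1) * A^n \<le> 4 * C1 * (C1 + 1) * (2^N0 * (R/p)^N0)"
        using cpos by (intro mult_left_mono) auto
      then show "4 * C1 * (A^n * (C1 + 1)) \<le> C * (R / real_of_ereal (rho_w C1 w \<mu> x)) ^ N0"
      proof -
        have eqL: "4 * C1 * (A^n * (C1 + 1)) = 4 * C1 * (C1 + 1) * A^n" by (simp only: mult_ac)
        have eqR: "C * (R / p) ^ N0 = 4 * C1 * (C1 + 1) * (2^N0 * (R/p)^N0)"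
          unfolding C_def by (simp only: mult_ac)
        show ?thesis unfolding p real_of_ereal.simps eqL eqR by fact
      qed
    qed
    finally show "Qfun w \<mu> x R \<le> ennreal (C * (R / real_of_ereal (rho_w C1 w \<mu> x)) ^ N0)" .
  qed
qed

end
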